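(* Fix $\lambda\in[0,1)$ and $p\in[0,1]$, and denote by $\mathbf{v}(\mathbf{v}^0,\cdot)$ the unique solution to the fluid model with initial condition $\mathbf{v}^0\in\overline{\mathcal{V}}^\infty$. If $\mathbf{w}^n\in\overline{\mathcal{V}}^\infty$ for all $n$ and $\|\mathbf{w}^n-\mathbf{v}^0\|_w\to0$ as $n\to\infty$, then for all $t\ge0$, $\lim_{n\to\infty}\|\mathbf{v}(\mathbf{w}^n,t)-\mathbf{v}(\mathbf{v}^0,t)\|_w=0$.
   Context: $\mathcal{S}=\{\mathbf{s}\in[0,1]^{\mathbb{Z}_+}:1=\mathbf{s}_0\ge\mathbf{s}_1\ge\cdots\ge0\}$, $\overline{\mathcal{S}}^\infty=\{\mathbf{s}\in\mathcal{S}:\sum_{i\ge1}\mathbf{s}_i<\infty\}$, $\overline{\mathcal{V}}^\infty=\{\mathbf{v}:\mathbf{v}_i=\sum_{j\ge i}\mathbf{s}_j\ \forall i,\text{ for some }\mathbf{s}\in\overline{\mathcal{S}}^\infty\}$; $\|\mathbf{x}\|_w^2=\sum_{i\ge0}2^{-i}\mathbf{x}_i^2$. $g_i(\mathbf{v})=p$ if $\mathbf{v}_i>0$, $=\min\{\lambda\mathbf{v}_{i-1},p\}$ if $\mathbf{v}_i=0<\mathbf{v}_{i-1}$, $=0$ if $\mathbf{v}_i=\mathbf{v}_{i-1}=0$. A solution to the fluid model with initial condition $\mathbf{v}^0$ is $\mathbf{v}:[0,\infty)\to\overline{\mathcal{V}}^\infty$ with (0) all coordinates $L$-Lipschitz for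 a common $L$; (1) $\mathbf{v}(0)=\mathbf{v}^0$; (2) for all $t$, $\mathbf{v}_0-\mathbf{v}_1=1$ and $1\ge\mathbf{v}_i-\mathbf{v}_{i+1}\ge\mathbf{v}_{i+1}-\mathbf{v}_{i+2}\ge0$, $i\ge0$; (3) for a.e. $t$ and all $i\ge1$, $\dot{\mathbf{v}}_i=\lambda(\mathbf{v}_{i-1}-\mathbf{v}_i)-(1-p)(\mathbf{v}_i-\mathbf{v}_{i+1})-g_i(\mathbf{v})$. It exists and is unique. *)

theory Defs
  imports "HOL-Analysis.Analysis"
begin

definition S_set :: "(nat \<Rightarrow> real) set" where
  "S_set = {s. s 0 = 1 \<and> (\<forall>i. 0 \<le> s i \<and> s i \<le> 1) \<and> (\<forall>i. s (Suc i) \<le> s i)}"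

definition S_fin :: "(nat \<Rightarrow> real) set" where
  "S_fin = {s \<in> S_set. summable (\<lambda>i. s (Suc i))}"

definition V_fin :: "(nat \<Rightarrow> real) set" where
  "V_fin = {v. \<exists>s \<in> S_fin. \<forall>i. v i = (\<Sum>j. s (j + i))}"

definition wnorm :: "(nat \<Rightarrow> real) \<Rightarrow> real" where
  "wnorm x = sqrt (\<Sum>i. x i ^ 2 / 2 ^ i)"

definition g_fun :: "real \<Rightarrow> real \<Rightarrow> (nat \<Rightarrow> real) \<Rightarrow> nat \<Rightarrow> real" where
  "g_fun lam p v i =
     (if v i > 0 then p
      else if v (i - 1) > 0 then min (lam * v (i - 1)) p
      else 0)"

definition fluid_solution ::
  "real \<Rightarrow> real \<Rightarrow> (nat \<Rightarrow> real) \<Rightarrow> (real \<Rightarrow> nat \<Rightarrow> real) \<Rightarrow> bool" where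
  "fluid_solution lam p v0 v \<longleftrightarrow>
     (\<forall>t \<ge> 0. v t \<in> V_fin) \<and>
     (\<exists>L. \<forall>i. \<forall>s \<ge> 0. \<forall>t \<ge> 0. \<bar>v s i - v t i\<bar> \<le> L * \<bar>s - t\<bar>) \<and>
     v 0 = v0 \<and>
     (\<forall>t \<ge> 0. v t 0 - v t 1 = 1 \<and>
        (\<forall>i. 1 \<ge> v t i - v t (i + 1) \<and>
             v t i - v t (i + 1) \<ge> v t (i + 1) - v t (i + 2) \<and>
             v t (i + 1) - v t (i + 2) \<ge> 0)) \<and>
     (AE t in lborel. t > 0 \<longrightarrow>
        (\<forall>i \<ge> 1. ((\<lambda>s. v s i) has_real_derivative
            (lam * (v t (i - 1) - v t i) - (1 - p) * (v t i - v t (i + 1))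
             - g_fun lam p (v t) i)) (at t)))"

end

theory Submission imports Defs begin


lemma mono_ae:
  fixes F :: "real \<Rightarrow> real" and a b M :: real and N :: "real set"
  assumes ab: "a \<le> b"
    and lip: "\<And>x y. x \<in> {a..b} \<Longrightarrow> y \<in> {a..b} \<Longrightarrow> \<bar>F x - F y\<bar> \<le> M * \<bar>x - y\<bar>"
    and neg: "negligible N"
    and der: "\<And>t. t \<in> {a<..<b} \<Longrightarrow> t \<notin> N \<Longrightarrow> \<exists>D. (F has_real_derivative D) (at t) \<and> D \<le> 0"
  shows "F b \<le> F a"
proof (rule ccontr)
  assume "\<not> F b \<le> F a"
  hence Fab: "F a < F b" by simp
  have "a < b" using Fab ab by (cases "a = b") auto
  define e where "e = (F b - F a) / (2 * (b - a))"
  have e0: "e > 0" using Fab \<open>a < b\<close> by (simp add: e_def)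
  define G where "G t = F t - e * (t - a)" for t
  have "e * (b - a) = (F b - F a) / 2" using \<open>a<b\<close> by (simp add: e_def field_simps)
  hence Gab: "G a < G b"
    using Fab by (simp add: G_def)
  have Glip: "\<bar>G x - G y\<bar> \<le> (M + e) * \<bar>x - y\<bar>" if "x \<in> {a..b}" "y \<in> {a..b}" for x y
  proof -
    have "\<bar>G x - G y\<bar> = \<bar>(F x - F y) - e * (x - y)\<bar>" by (simp add: G_def algebra_simps)
    also have "\<dots> \<le> \<bar>F x - F y\<bar> + \<bar>e * (x - y)\<bar>" by (rule abs_triangle_ineq4)
    also have "\<dots> \<le> M * \<bar>x - y\<bar> + e * \<bar>x - y\<bar>" using lip[OF that] e0 by (simp add: abs_mult)
    finally show ?thesis by (simp add: algebra_simps)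
  qed
  have Gcont: "continuous_on {a..b} G"
  proof (rule continuous_onI)
    fix x d :: real assume x: "x \<in> {a..b}" and d: "d > 0"
    show "\<exists>r>0. \<forall>y\<in>{a..b}. dist y x < r \<longrightarrow> dist (G y) (G x) \<le> d"
    proof (intro exI[of _ "d / (\<bar>M\<bar> + e + 1)"] conjI ballI impI)
      show "d / (\<bar>M\<bar> + e + 1) > 0" using d e0 by simp
      fix y assume y: "y \<in> {a..b}" and dy: "dist y x < d / (\<bar>M\<bar> + e + 1)"
      have "dist (G y) (G x) \<le> (M + e) * \<bar>y - x\<bar>" using Glip[OF y x] by (simp add: dist_real_def)
      also have "\<dots> \<le> (\<bar>M\<bar> + e + 1) * \<bar>y - x\<bar>" by (intro mult_right_mono) auto
      also have "\<dots> \<le> d" using dy e0 by (simp add: dist_real_def field_simps)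
      finally show "dist (G y) (G x) \<le> d" .
    qed
  qed
  define N' where "N' = (N \<union> {a, b}) \<inter> {a..b}"
  have negN': "negligible N'"
    unfolding N'_def by (rule negligible_Int) (use neg in auto)
  have "negligible (G ` N')"
  proof (rule negligible_locally_Lipschitz_image)
    show "DIM(real) \<le> DIM(real)" by simp
    show "negligible N'" by fact
    fix x assume "x \<in> N'"
    hence x: "x \<in> {a..b}" by (auto simp: N'_def)
    show "\<exists>T B. open T \<and> x \<in> T \<and> (\<forall>y\<in>N' \<inter> T. norm (G y - G x) \<le> B * norm (y - x))"
    proof (intro exI[of _ UNIV] exI[of _ "M + e"] conjI ballI)
      fix z assume "z \<in> N' \<inter> UNIV"
      hence "z \<in> {a..b}" by (auto simp: N'_def)
      thus "norm (G z - G x) \<le> (M + e) * norm (z - x)" using Glip[of z x] x by simp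
    qed auto
  qed
  moreover have "\<not> negligible {G a<..<G b}"
    using negligible_interval(2)[of "G a" "G b"] Gab by simp
  ultimately obtain y where y: "y \<in> {G a<..<G b}" "y \<notin> G ` N'"
    by (metis negligible_subset subsetI)
  define S where "S = {t \<in> {a..b}. G t \<le> y}"
  have Sne: "a \<in> S" using y ab by (auto simp: S_def)
  have Sbdd: "bdd_above S" by (auto simp: S_def bdd_above_def)
  have Scl: "closed S"
  proof -
    have "S = {a..b} \<inter> G -` {..y}" by (auto simp: S_def)
    thus ?thesis using continuous_closed_preimage[OF Gcont] by simp
  qed
  define ts where "ts = Sup S"
  have tsS: "ts \<in> S" unfolding ts_def using closed_contains_Sup Scl Sbdd Sne by blast
  hence ts: "a \<le> ts" "ts \<le> b" "G ts \<le> y" by (auto simp: S_def)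
  have "ts \<noteq> b" using ts y by auto
  hence tsb: "ts < b" using ts by simp
  obtain s where s: "ts \<le> s" "s \<le> b" "G s = y"
    using IVT'[of G ts y b] ts tsb y continuous_on_subset[OF Gcont, of "{ts..b}"] by auto
  hence "s \<in> S" using ts by (auto simp: S_def)
  hence "s \<le> ts" unfolding ts_def using Sbdd by (rule cSup_upper)
  hence Gts: "G ts = y" using s by simp
  have "ts \<noteq> a" using Gts y by auto
  hence tsa: "a < ts" using ts by simp
  have "ts \<notin> N'" using Gts y by auto
  hence "ts \<notin> N" using ts by (auto simp: N'_def)
  then obtain D where D: "(F has_real_derivative D) (at ts)" "D \<le> 0"
    using der[of ts] tsa tsb by auto
  have "(G has_real_derivative D - e) (at ts)"
    unfolding G_def by (auto intro!: derivative_eq_intros D(1))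
  moreover have "D - e < 0" using D e0 by simp
  ultimately obtain d where d: "d > 0" "\<And>h. h > 0 \<Longrightarrow> h < d \<Longrightarrow> G ts > G (ts + h)"
    using DERIV_neg_dec_right by blast
  define h where "h = min (d/2) ((b - ts)/2)"
  have h: "h > 0" "h < d" "ts + h \<le> b" using d tsb unfolding h_def by (auto simp: min_def field_simps)
  have "ts + h \<in> S" using d(2)[OF h(1,2)] Gts h ts by (auto simp: S_def)
  hence "ts + h \<le> ts" unfolding ts_def using Sbdd by (rule cSup_upper)
  thus False using h by simp
qed
lemma exp_lip:
  fixes C x y :: real assumes "C \<ge> 0" "x \<ge> 0" "y \<ge> 0"
  shows "\<bar>exp (- C * x) - exp (- C * y)\<bar> \<le> C * \<bar>x - y\<bar>"
proof -
  have key: "\<bar>exp (- C * x) - exp (- C * y)\<bar> \<le> C * \<bar>x - y\<bar>" if xy: "x \<le> y" "x \<ge> 0" for x y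
  proof -
    define q where "q = exp (- (C * (y - x)))"
    define a where "a = exp (- C * x)"
    have "a * q = exp (- C * x + - (C * (y - x)))" unfolding a_def q_def mult_exp_exp by simp
    also have "- C * x + - (C * (y - x)) = - C * y" by (simp add: algebra_simps)
    finally have e': "a * q = exp (- C * y)" .
    note e = e'[symmetric]
    have q1: "q \<ge> 1 - C * (y - x)" using exp_ge_add_one_self[of "- (C * (y - x))"] by (simp add: q_def)
    have q2: "q \<le> 1" using assms xy by (simp add: q_def)
    have a1: "a \<le> 1" "a > 0" using assms xy by (auto simp: a_def)
    have "\<bar>exp (- C * x) - exp (- C * y)\<bar> = a * (1 - q)"
    proof -
      have "exp (- C * x) - exp (- C * y) = a - a * q" unfolding e by (simp add: a_def)
      also have "\<dots> = a * (1 - q)" by (simp add: algebra_simps)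
      finally have "exp (- C * x) - exp (- C * y) = a * (1 - q)" .
      moreover have "a * (1 - q) \<ge> 0" using q2 a1 by simp
      ultimately show ?thesis by simp
    qed
    also have "\<dots> \<le> 1 * (C * (y - x))"
      using q1 q2 a1 by (intro mult_mono) auto
    finally have "\<bar>exp (- C * x) - exp (- C * y)\<bar> \<le> C * (y - x)" by simp
    thus ?thesis using xy by simp
  qed
  show ?thesis
    using key[of x y] key[of y x] assms by (cases "x \<le> y") (auto simp: abs_minus_commute)
qed

lemma gronwall_ae:
  fixes F :: "real \<Rightarrow> real" and T M C K :: real and N :: "real set"
  assumes T: "0 \<le> T" and C: "C > 0"
    and lip: "\<And>x y. x \<in> {0..T} \<Longrightarrow> y \<in> {0..T} \<Longrightarrow> \<bar>F x - F y\<bar> \<le> M * \<bar>x - y\<bar>"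
    and neg: "negligible N"
    and der: "\<And>t. t \<in> {0<..<T} \<Longrightarrow> t \<notin> N \<Longrightarrow> \<exists>D. (F has_real_derivative D) (at t) \<and> D \<le> C * F t + K"
  shows "F T + K / C \<le> exp (C * T) * (F 0 + K / C)"
proof -
  define H where "H t = exp (- C * t) * (F t + K / C)" for t
  define R where "R = \<bar>F 0\<bar> + \<bar>M\<bar> * T + \<bar>K / C\<bar>"
  have HT: "H T \<le> H 0"
  proof (rule mono_ae[OF T _ neg])
    fix x y assume x: "x \<in> {0..T}" and y: "y \<in> {0..T}"
    have Fy: "\<bar>F y + K / C\<bar> \<le> R"
    proof -
      have "\<bar>F y - F 0\<bar> \<le> M * \<bar>y - 0\<bar>" using lip[OF y, of 0] T by simp
      also have "\<dots> \<le> \<bar>M\<bar> * T" using y by (auto intro!: mult_mono simp: abs_mult)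
      finally show ?thesis unfolding R_def by linarith
    qed
    have "H x - H y = exp (- C * x) * (F x - F y) + (exp (- C * x) - exp (- C * y)) * (F y + K / C)"
      by (simp add: H_def algebra_simps)
    hence "\<bar>H x - H y\<bar> \<le> \<bar>exp (- C * x) * (F x - F y)\<bar> + \<bar>(exp (- C * x) - exp (- C * y)) * (F y + K / C)\<bar>"
      by (metis abs_triangle_ineq)
    also have "\<dots> \<le> 1 * (M * \<bar>x - y\<bar>) + (C * \<bar>x - y\<bar>) * R"
      unfolding abs_mult
    proof (intro add_mono mult_mono)
      show "\<bar>exp (- C * x)\<bar> \<le> 1" using x C by simp
      show "\<bar>F x - F y\<bar> \<le> M * \<bar>x - y\<bar>" by (rule lip[OF x y])
      show "\<bar>exp (- C * x) - exp (- C * y)\<bar> \<le> C * \<bar>x - y\<bar>" using exp_lip[of C x y] x y C by simp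
      show "\<bar>F y + K / C\<bar> \<le> R" by (rule Fy)
    qed (use C in auto)
    finally show "\<bar>H x - H y\<bar> \<le> (M + C * R) * \<bar>x - y\<bar>" by (simp add: algebra_simps)
  next
    fix t assume t: "t \<in> {0<..<T}" "t \<notin> N"
    then obtain D where D: "(F has_real_derivative D) (at t)" "D \<le> C * F t + K" using der by blast
    have "(H has_real_derivative (- C * exp (- C * t) * (F t + K / C) + exp (- C * t) * D)) (at t)"
      unfolding H_def by (auto intro!: derivative_eq_intros D(1))
    moreover have "- C * exp (- C * t) * (F t + K / C) + exp (- C * t) * D = exp (- C * t) * (D - C * F t - K)"
      using C by (simp add: field_simps)
    moreover have "exp (- C * t) * (D - C * F t - K) \<le> 0"
      using D(2) by (intro mult_nonneg_nonpos) auto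
    ultimately show "\<exists>D. (H has_real_derivative D) (at t) \<and> D \<le> 0" by auto
  qed
  hence h1: "exp (- C * T) * (F T + K / C) \<le> F 0 + K / C" by (simp add: H_def)
  have h2: "exp (C * T) * (exp (- C * T) * (F T + K / C)) \<le> exp (C * T) * (F 0 + K / C)"
    using h1 by (intro mult_left_mono) auto
  have h3: "exp (C * T) * exp (- C * T) = 1" by (simp add: mult_exp_exp)
  have h4: "exp (C * T) * (exp (- C * T) * (F T + K / C)) = F T + K / C"
    by (simp only: mult.assoc[symmetric] h3) simp
  show ?thesis using h2 unfolding h4 .
qed



lemma shift_down:
  fixes f :: "nat \<Rightarrow> real" assumes f: "\<And>i. f i \<ge> 0"
  shows "(\<Sum>i<N. f (i - 1) / 2 ^ i) \<le> 2 * (\<Sum>i<N. f i / 2 ^ i)"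
proof (cases N)
  case 0 thus ?thesis by simp
next
  case (Suc M)
  define R where "R = (\<Sum>i<Suc M. f i / 2 ^ i)"
  have "(\<Sum>i<Suc M. f (i - 1) / 2 ^ i) = f 0 + (\<Sum>i<M. f i / 2 ^ i) / 2"
    by (subst sum.lessThan_Suc_shift) (simp add: sum_divide_distrib mult.commute)
  moreover have "(\<Sum>i<M. f i / 2 ^ i) \<le> R"
    unfolding R_def by (simp add: f)
  moreover have "f 0 \<le> R"
    unfolding R_def sum.lessThan_Suc_shift using f by (simp add: sum_nonneg)
  moreover have "(\<Sum>i<M. f i / 2 ^ i) \<ge> 0" using f by (simp add: sum_nonneg)
  ultimately have "(\<Sum>i<Suc M. f (i - 1) / 2 ^ i) \<le> 2 * R" by linarith
  thus ?thesis using Suc R_def by simp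
qed

lemma shift_up:
  fixes f :: "nat \<Rightarrow> real" assumes f: "\<And>i. f i \<ge> 0"
  shows "(\<Sum>i<N. f (i + 1) / 2 ^ i) \<le> 2 * (\<Sum>i<N. f i / 2 ^ i) + 2 * (f N / 2 ^ N)"
proof -
  have "(\<Sum>i<Suc N. f i / 2 ^ i) = f 0 + (\<Sum>i<N. f (i + 1) / 2 ^ i) / 2"
    by (subst sum.lessThan_Suc_shift) (simp add: sum_divide_distrib mult.commute)
  thus ?thesis using f[of 0] by simp
qed

lemma summable_bdd:
  fixes f :: "nat \<Rightarrow> real" assumes "\<And>i. \<bar>f i\<bar> \<le> B"
  shows "summable (\<lambda>i. f i ^ 2 / 2 ^ i)"
proof (rule summable_comparison_test)
  show "summable (\<lambda>i. B ^ 2 * (1/2) ^ i)" by (intro summable_mult summable_geometric) simp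
  show "\<exists>N. \<forall>n\<ge>N. norm (f n ^ 2 / 2 ^ n) \<le> B ^ 2 * (1 / 2) ^ n"
  proof (intro exI allI impI)
    fix n :: nat
    have "\<bar>f n\<bar> ^ 2 \<le> B ^ 2" using assms[of n] by (intro power_mono) auto
    hence "f n ^ 2 \<le> B ^ 2" by simp
    thus "norm (f n ^ 2 / 2 ^ n) \<le> B ^ 2 * (1 / 2) ^ n" by (simp add: power_divide divide_right_mono)
  qed
qed

lemma Vfin_nonneg: "v \<in> V_fin \<Longrightarrow> v i \<ge> 0"
  unfolding V_fin_def S_fin_def S_set_def
proof clarify
  fix s assume s: "\<forall>i. v i = (\<Sum>j. s (j + i))" "s 0 = 1" "\<forall>i. 0 \<le> s i \<and> s i \<le> 1"
    "\<forall>i. s (Suc i) \<le> s i" "summable (\<lambda>i. s (Suc i))"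
  have "summable (\<lambda>j. s (j + i))"
    using s(5) by (metis summable_Suc_iff summable_iff_shift)
  thus "v i \<ge> 0" using s(1,3) by (simp add: suminf_nonneg)
qed

lemma g_mono:
  fixes al be :: "nat \<Rightarrow> real" assumes "p \<ge> 0" "al j \<ge> 0" "be j \<ge> 0"
  shows "(al j - be j) * (g_fun lam p al j - g_fun lam p be j) \<ge> 0"
proof (cases "al j > 0")
  case True
  have "g_fun lam p be j \<le> p" using assms unfolding g_fun_def by (auto simp: min_def)
  moreover have "g_fun lam p al j = p" using True unfolding g_fun_def by simp
  moreover have "al j - be j \<ge> 0 \<or> be j > 0" using assms by auto
  ultimately show ?thesis
    using True unfolding g_fun_def by (auto intro!: mult_nonneg_nonneg)
next
  case False
  hence a0: "al j = 0" using assms by simp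
  show ?thesis
  proof (cases "be j > 0")
    case True
    have "g_fun lam p al j \<le> p" using assms unfolding g_fun_def by (auto simp: min_def)
    moreover have "g_fun lam p be j = p" using True unfolding g_fun_def by simp
    ultimately have "be j * (g_fun lam p al j - g_fun lam p be j) \<le> 0"
      using True by (intro mult_nonneg_nonpos) auto
    thus ?thesis using a0 by simp
  next
    case False
    hence "be j = 0" using assms by simp
    thus ?thesis using a0 by simp
  qed
qed



lemma sol_facts:
  assumes sa: "fluid_solution lam p x a" and t: "t \<ge> 0"
  shows "a t i \<ge> 0" "a t 0 = 1 + a t 1" "a t (Suc i) \<le> a t 1"
proof -
  have V: "a t \<in> V_fin" using sa t unfolding fluid_solution_def by blast
  thus "a t i \<ge> 0" by (rule Vfin_nonneg)
  have c: "a t 0 - a t 1 = 1 \<and> (\<forall>i. 1 \<ge> a t i - a t (i + 1) \<and>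
             a t i - a t (i + 1) \<ge> a t (i + 1) - a t (i + 2) \<and>
             a t (i + 1) - a t (i + 2) \<ge> 0)"
    using sa t unfolding fluid_solution_def by blast
  thus "a t 0 = 1 + a t 1" by simp
  show "a t (Suc i) \<le> a t 1"
  proof (induction i)
    case 0 thus ?case by simp
  next
    case (Suc i)
    have "a t (i + 1) - a t (i + 2) \<ge> 0" using c by blast
    thus ?case using Suc by simp
  qed
qed

lemma sol_lip:
  assumes sa: "fluid_solution lam p x a"
  obtains L where "L \<ge> 0" "\<And>i s t. s \<ge> 0 \<Longrightarrow> t \<ge> 0 \<Longrightarrow> \<bar>a s i - a t i\<bar> \<le> L * \<bar>s - t\<bar>"
proof -
  obtain L where L: "\<forall>i. \<forall>s \<ge> 0. \<forall>t \<ge> 0. \<bar>a s i - a t i\<bar> \<le> L * \<bar>s - t\<bar>"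
    using sa unfolding fluid_solution_def by blast
  show ?thesis
  proof (rule that[of "max L 0"])
    fix i s t :: real
    show "max L 0 \<ge> 0" by simp
  next
    fix i and s t :: real assume "s \<ge> 0" "t \<ge> 0"
    hence "\<bar>a s i - a t i\<bar> \<le> L * \<bar>s - t\<bar>" using L by blast
    also have "\<dots> \<le> max L 0 * \<bar>s - t\<bar>" by (intro mult_right_mono) auto
    finally show "\<bar>a s i - a t i\<bar> \<le> max L 0 * \<bar>s - t\<bar>" .
  qed
qed

lemma sol_deriv:
  assumes sa: "fluid_solution lam p x a"
  shows "AE t in lborel. t > 0 \<longrightarrow> (\<forall>k. ((\<lambda>s. a s (Suc k)) has_real_derivative
     (lam * (a t k - a t (Suc k)) - (1 - p) * (a t (Suc k) - a t (Suc (Suc k)))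
      - g_fun lam p (a t) (Suc k))) (at t))"
proof -
  have "AE t in lborel. t > 0 \<longrightarrow>
        (\<forall>i \<ge> 1. ((\<lambda>s. a s i) has_real_derivative
            (lam * (a t (i - 1) - a t i) - (1 - p) * (a t i - a t (i + 1))
             - g_fun lam p (a t) i)) (at t))"
    using sa unfolding fluid_solution_def by blast
  thus ?thesis
  proof (rule AE_mp, intro AE_I2 impI allI)
    fix t k
    assume A: "t > 0 \<longrightarrow> (\<forall>i \<ge> 1. ((\<lambda>s. a s i) has_real_derivative
            (lam * (a t (i - 1) - a t i) - (1 - p) * (a t i - a t (i + 1))
             - g_fun lam p (a t) i)) (at t))" "t > 0"
    hence "((\<lambda>s. a s (Suc k)) has_real_derivative
            (lam * (a t (Suc k - 1) - a t (Suc k)) - (1 - p) * (a t (Suc k) - a t (Suc k + 1))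
             - g_fun lam p (a t) (Suc k))) (at t)" using A \<open>t > 0\<close> by (metis One_nat_def Suc_le_mono le0)
    thus "((\<lambda>s. a s (Suc k)) has_real_derivative
     (lam * (a t k - a t (Suc k)) - (1 - p) * (a t (Suc k) - a t (Suc (Suc k)))
      - g_fun lam p (a t) (Suc k))) (at t)" by simp
  qed
qed

lemma quad_bound:
  fixes l q z w u G :: real
  assumes "0 \<le> l" "l \<le> 1" "0 \<le> q" "q \<le> 1" "z * G' \<ge> 0"
  shows "2 * z * (l * (w - z) - q * (z - u) - G') \<le> 2 * z^2 + w^2 + u^2"
proof -
  have h1: "l * (2 * z * w) \<le> l * (z^2 + w^2)"
    using assms(1) sum_squares_bound[of z w] by (intro mult_left_mono) (auto simp: power2_eq_square)
  have h2: "q * (2 * z * u) \<le> q * (z^2 + u^2)"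
    using assms(3) sum_squares_bound[of z u] by (intro mult_left_mono) (auto simp: power2_eq_square)
  have h3: "l * (z^2 + w^2) \<le> z^2 + w^2" using assms(1,2) by (intro mult_left_le_one_le) auto
  have h4: "q * (z^2 + u^2) \<le> z^2 + u^2" using assms(3,4) by (intro mult_left_le_one_le) auto
  have h5: "l * z^2 \<ge> 0" "q * z^2 \<ge> 0" using assms by auto
  have "2 * z * (l * (w - z) - q * (z - u) - G') =
        l * (2 * z * w) - 2 * (l * z^2) - 2 * (q * z^2) + q * (2 * z * u) - 2 * (z * G')"
    by (simp add: algebra_simps power2_eq_square)
  thus ?thesis using h1 h2 h3 h4 h5 assms(5) by linarith
qed



lemma wnorm_split:
  fixes z :: "nat \<Rightarrow> real"
  assumes "summable (\<lambda>i. z i ^ 2 / 2 ^ i)"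
  shows "wnorm z ^ 2 = z 0 ^ 2 + (\<Sum>i. z (Suc i) ^ 2 / 2 ^ i) / 2"
proof -
  let ?f = "\<lambda>i. z i ^ 2 / 2 ^ i"
  have nn: "suminf ?f \<ge> 0" using assms by (intro suminf_nonneg) auto
  have sS: "summable (\<lambda>i. ?f (Suc i))" using assms summable_Suc_iff[of ?f] by simp
  have e1: "(\<lambda>i. ?f (Suc i)) = (\<lambda>i. (z (Suc i) ^ 2 / 2 ^ i) / 2)" by (simp add: mult.commute)
  have sS2: "summable (\<lambda>i. z (Suc i) ^ 2 / 2 ^ i)"
  proof -
    have "summable (\<lambda>i. 2 * ((z (Suc i) ^ 2 / 2 ^ i) / 2))" using sS unfolding e1 by (rule summable_mult)
    thus ?thesis by simp
  qed
  have "suminf ?f = ?f 0 + suminf (\<lambda>i. ?f (Suc i))" using suminf_split_head[OF assms] by simp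
  also have "suminf (\<lambda>i. ?f (Suc i)) = (\<Sum>i. z (Suc i) ^ 2 / 2 ^ i) / 2"
    unfolding e1 by (rule suminf_divide[OF sS2])
  finally have "suminf ?f = z 0 ^ 2 + (\<Sum>i. z (Suc i) ^ 2 / 2 ^ i) / 2" by simp
  thus ?thesis unfolding wnorm_def using nn by simp
qed



lemma two_sol:
  fixes lam p T :: real and x y :: "nat \<Rightarrow> real" and a b :: "real \<Rightarrow> nat \<Rightarrow> real"
  assumes par: "0 \<le> lam" "lam \<le> 1" "0 \<le> p" "p \<le> 1"
    and sa: "fluid_solution lam p x a" and sb: "fluid_solution lam p y b" and T: "0 \<le> T"
  shows "wnorm (\<lambda>i. a T i - b T i) ^ 2 \<le> 3 * exp (6 * T) * wnorm (\<lambda>i. x i - y i) ^ 2"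
proof -
  obtain La where La: "La \<ge> 0" "\<And>i s t. s \<ge> 0 \<Longrightarrow> t \<ge> 0 \<Longrightarrow> \<bar>a s i - a t i\<bar> \<le> La * \<bar>s - t\<bar>"
    using sol_lip[OF sa] by blast
  obtain Lb where Lb: "Lb \<ge> 0" "\<And>i s t. s \<ge> 0 \<Longrightarrow> t \<ge> 0 \<Longrightarrow> \<bar>b s i - b t i\<bar> \<le> Lb * \<bar>s - t\<bar>"
    using sol_lip[OF sb] by blast
  have a0: "a 0 = x" using sa unfolding fluid_solution_def by blast
  have b0: "b 0 = y" using sb unfolding fluid_solution_def by blast
  define e where "e t i = a t (Suc i) - b t (Suc i)" for t i
  define B where "B = \<bar>x 1\<bar> + \<bar>y 1\<bar> + (La + Lb) * T"
  have B0: "B \<ge> 0" using La Lb T by (simp add: B_def)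
  have ebound: "\<bar>e t i\<bar> \<le> B" if t: "t \<in> {0..T}" for t i
  proof -
    have t0: "t \<ge> 0" "t \<le> T" using t by auto
    have "a t 1 - a 0 1 \<le> La * \<bar>t - 0\<bar>" using La(2)[of t 0 1] t0 by simp
    hence A1: "a t 1 \<le> \<bar>x 1\<bar> + La * T" using a0 t0 La(1) mult_left_mono[of t T La] by auto
    have "b t 1 - b 0 1 \<le> Lb * \<bar>t - 0\<bar>" using Lb(2)[of t 0 1] t0 by simp
    hence B1: "b t 1 \<le> \<bar>y 1\<bar> + Lb * T" using b0 t0 Lb(1) mult_left_mono[of t T Lb] by auto
    have "0 \<le> a t (Suc i)" "a t (Suc i) \<le> a t 1" "0 \<le> b t (Suc i)" "b t (Suc i) \<le> b t 1"
      using sol_facts[OF sa t0(1)] sol_facts[OF sb t0(1)] by auto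
    thus ?thesis using A1 B1 unfolding e_def B_def by (simp add: algebra_simps abs_le_iff)
  qed
  have elip: "\<bar>e s i - e t i\<bar> \<le> (La + Lb) * \<bar>s - t\<bar>" if "s \<ge> 0" "t \<ge> 0" for s t i
  proof -
    have "\<bar>e s i - e t i\<bar> \<le> \<bar>a s (Suc i) - a t (Suc i)\<bar> + \<bar>b s (Suc i) - b t (Suc i)\<bar>"
      unfolding e_def by linarith
    thus ?thesis using La(2)[OF that, of "Suc i"] Lb(2)[OF that, of "Suc i"] by (simp add: algebra_simps)
  qed
  have eprev: "a t k - b t k = e t (k - 1)" if "t \<ge> 0" for t k
  proof (cases k)
    case 0 thus ?thesis using sol_facts(2)[OF sa that] sol_facts(2)[OF sb that] by (simp add: e_def)
  next
    case (Suc m) thus ?thesis by (simp add: e_def)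
  qed
  define F where "F N t = (\<Sum>i<N. e t i ^ 2 / 2 ^ i)" for N t
  define K where "K N = 2 * B ^ 2 * (1/2) ^ N" for N :: nat
  have AEab: "AE t in lborel. t > 0 \<longrightarrow>
      (\<forall>k. ((\<lambda>s. a s (Suc k)) has_real_derivative
     (lam * (a t k - a t (Suc k)) - (1 - p) * (a t (Suc k) - a t (Suc (Suc k)))
      - g_fun lam p (a t) (Suc k))) (at t)) \<and>
      (\<forall>k. ((\<lambda>s. b s (Suc k)) has_real_derivative
     (lam * (b t k - b t (Suc k)) - (1 - p) * (b t (Suc k) - b t (Suc (Suc k)))
      - g_fun lam p (b t) (Suc k))) (at t))"
    using sol_deriv[OF sa] sol_deriv[OF sb] by eventually_elim blast
  then obtain Nn where Nn: "{t \<in> space lborel. \<not> (t > 0 \<longrightarrow>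
      (\<forall>k. ((\<lambda>s. a s (Suc k)) has_real_derivative
     (lam * (a t k - a t (Suc k)) - (1 - p) * (a t (Suc k) - a t (Suc (Suc k)))
      - g_fun lam p (a t) (Suc k))) (at t)) \<and>
      (\<forall>k. ((\<lambda>s. b s (Suc k)) has_real_derivative
     (lam * (b t k - b t (Suc k)) - (1 - p) * (b t (Suc k) - b t (Suc (Suc k)))
      - g_fun lam p (b t) (Suc k))) (at t)))} \<subseteq> Nn"
    "emeasure lborel Nn = 0" "Nn \<in> sets lborel"
    by (rule AE_E)
  have negN: "negligible Nn"
    unfolding negligible_iff_null_sets using Nn(2,3) by (intro null_sets_completionI) (simp add: null_sets_def)
  have main: "F N T + K N / 6 \<le> exp (6 * T) * (F N 0 + K N / 6)" for N
  proof (rule gronwall_ae[OF T _ _ negN])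
    show "(0::real) < 6" by simp
    fix s t assume s: "s \<in> {0..T}" and t: "t \<in> {0..T}"
    have "\<bar>F N s - F N t\<bar> = \<bar>\<Sum>i<N. e s i ^ 2 / 2 ^ i - e t i ^ 2 / 2 ^ i\<bar>"
      by (simp add: F_def sum_subtractf)
    also have "\<dots> \<le> (\<Sum>i<N. \<bar>e s i ^ 2 / 2 ^ i - e t i ^ 2 / 2 ^ i\<bar>)" by (rule sum_abs)
    also have "\<dots> \<le> (\<Sum>i<N. 2 * B * (La + Lb) * \<bar>s - t\<bar>)"
    proof (rule sum_mono)
      fix i
      have "\<bar>e s i ^ 2 / 2 ^ i - e t i ^ 2 / 2 ^ i\<bar> = \<bar>e s i - e t i\<bar> * \<bar>e s i + e t i\<bar> / 2 ^ i"
      proof -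
        have "e s i ^ 2 / 2 ^ i - e t i ^ 2 / 2 ^ i = (e s i - e t i) * (e s i + e t i) / 2 ^ i"
          by (simp add: power2_eq_square algebra_simps diff_divide_distrib)
        thus ?thesis by (simp add: abs_mult)
      qed
      also have "\<dots> \<le> \<bar>e s i - e t i\<bar> * \<bar>e s i + e t i\<bar>"
        using divide_left_mono[of 1 "2 ^ i" "\<bar>e s i - e t i\<bar> * \<bar>e s i + e t i\<bar>"] by simp
      also have "\<dots> \<le> ((La + Lb) * \<bar>s - t\<bar>) * (2 * B)"
      proof (rule mult_mono)
        show "\<bar>e s i - e t i\<bar> \<le> (La + Lb) * \<bar>s - t\<bar>" using elip s t by simp
        show "\<bar>e s i + e t i\<bar> \<le> 2 * B" using ebound[OF s, of i] ebound[OF t, of i] by linarith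
      qed (use La Lb in auto)
      finally show "\<bar>e s i ^ 2 / 2 ^ i - e t i ^ 2 / 2 ^ i\<bar> \<le> 2 * B * (La + Lb) * \<bar>s - t\<bar>"
        by (simp add: algebra_simps)
    qed
    also have "\<dots> = (real N * (2 * B * (La + Lb))) * \<bar>s - t\<bar>" by simp
    finally show "\<bar>F N s - F N t\<bar> \<le> (real N * (2 * B * (La + Lb))) * \<bar>s - t\<bar>" .
  next
    fix t assume t: "t \<in> {0<..<T}" "t \<notin> Nn"
    hence t0: "t > 0" by simp
    have Dab: "\<forall>k. ((\<lambda>s. a s (Suc k)) has_real_derivative
     (lam * (a t k - a t (Suc k)) - (1 - p) * (a t (Suc k) - a t (Suc (Suc k)))
      - g_fun lam p (a t) (Suc k))) (at t)"
      "\<forall>k. ((\<lambda>s. b s (Suc k)) has_real_derivative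
     (lam * (b t k - b t (Suc k)) - (1 - p) * (b t (Suc k) - b t (Suc (Suc k)))
      - g_fun lam p (b t) (Suc k))) (at t)"
      using Nn(1) t by auto
    define G where "G k = g_fun lam p (a t) (Suc k) - g_fun lam p (b t) (Suc k)" for k
    define E where "E k = lam * (e t (k - 1) - e t k) - (1 - p) * (e t k - e t (Suc k)) - G k" for k
    have dE: "((\<lambda>s. e s k) has_real_derivative E k) (at t)" for k
    proof -
      have "((\<lambda>s. e s k) has_real_derivative
        (lam * (a t k - a t (Suc k)) - (1 - p) * (a t (Suc k) - a t (Suc (Suc k)))
      - g_fun lam p (a t) (Suc k)) - (lam * (b t k - b t (Suc k)) - (1 - p) * (b t (Suc k) - b t (Suc (Suc k)))
      - g_fun lam p (b t) (Suc k))) (at t)"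
        unfolding e_def using Dab by (intro DERIV_diff) auto
      moreover have "(lam * (a t k - a t (Suc k)) - (1 - p) * (a t (Suc k) - a t (Suc (Suc k)))
      - g_fun lam p (a t) (Suc k)) - (lam * (b t k - b t (Suc k)) - (1 - p) * (b t (Suc k) - b t (Suc (Suc k)))
      - g_fun lam p (b t) (Suc k)) = E k"
        using t0 unfolding E_def G_def eprev[of t k, symmetric, OF less_imp_le[OF t0]]
        unfolding e_def by (simp add: algebra_simps)
      ultimately show ?thesis by simp
    qed
    have dF: "(F N has_real_derivative (\<Sum>i<N. 2 * e t i * E i / 2 ^ i)) (at t)"
      unfolding F_def[abs_def]
      by (rule DERIV_sum) (auto intro!: derivative_eq_intros dE)
    have Gpos: "e t k * G k \<ge> 0" for k
      unfolding e_def G_def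
      using g_mono[OF par(3), of "a t" "Suc k" "b t" lam] sol_facts(1)[OF sa, of t] sol_facts(1)[OF sb, of t] t0
      by auto
    have termb: "2 * e t i * E i / 2 ^ i \<le> (2 * e t i ^ 2 + e t (i - 1) ^ 2 + e t (i + 1) ^ 2) / 2 ^ i" for i
    proof -
      have "2 * e t i * E i \<le> 2 * e t i ^ 2 + e t (i - 1) ^ 2 + e t (Suc i) ^ 2"
        unfolding E_def using quad_bound[of lam "1 - p" "e t i" "G i" "e t (i - 1)" "e t (Suc i)"] par Gpos[of i]
        by simp
      thus ?thesis by (simp add: divide_right_mono)
    qed
    have "(\<Sum>i<N. 2 * e t i * E i / 2 ^ i) \<le> (\<Sum>i<N. (2 * e t i ^ 2 + e t (i - 1) ^ 2 + e t (i + 1) ^ 2) / 2 ^ i)"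
      by (rule sum_mono) (rule termb)
    also have "\<dots> = 2 * F N t + (\<Sum>i<N. e t (i - 1) ^ 2 / 2 ^ i) + (\<Sum>i<N. e t (i + 1) ^ 2 / 2 ^ i)"
      by (simp add: F_def add_divide_distrib sum.distrib sum_distrib_left)
    also have "\<dots> \<le> 2 * F N t + 2 * F N t + (2 * F N t + 2 * (e t N ^ 2 / 2 ^ N))"
      using shift_down[of "\<lambda>i. e t i ^ 2" N] shift_up[of "\<lambda>i. e t i ^ 2" N]
      unfolding F_def by (intro add_mono) auto
    also have "2 * (e t N ^ 2 / 2 ^ N) \<le> K N"
    proof -
      have "\<bar>e t N\<bar> ^ 2 \<le> B ^ 2" using ebound[of t N] t by (intro power_mono) auto
      hence "e t N ^ 2 \<le> B ^ 2" by simp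
      hence "e t N ^ 2 / 2 ^ N \<le> B ^ 2 / 2 ^ N" by (simp add: divide_right_mono)
      thus ?thesis by (simp add: K_def power_divide)
    qed
    finally have "(\<Sum>i<N. 2 * e t i * E i / 2 ^ i) \<le> 6 * F N t + K N" by simp
    thus "\<exists>D. (F N has_real_derivative D) (at t) \<and> D \<le> 6 * F N t + K N"
      using dF by blast
  qed
  have T0: "T \<in> {0..T}" "0 \<in> {0..T}" using T by auto
  have sT: "summable (\<lambda>i. e T i ^ 2 / 2 ^ i)" by (rule summable_bdd[OF ebound[OF T0(1)]])
  have s0: "summable (\<lambda>i. e 0 i ^ 2 / 2 ^ i)" by (rule summable_bdd[OF ebound[OF T0(2)]])
  define ST where "ST = (\<Sum>i. e T i ^ 2 / 2 ^ i)"
  define S0 where "S0 = (\<Sum>i. e 0 i ^ 2 / 2 ^ i)"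
  have limT: "(\<lambda>N. F N T) \<longlonglongrightarrow> ST" unfolding F_def ST_def by (rule summable_LIMSEQ[OF sT])
  have F0: "F N 0 \<le> S0" for N unfolding F_def S0_def
    by (rule sum_le_suminf[OF s0]) auto
  have K0: "K N \<ge> 0" for N by (simp add: K_def)
  have limK: "K \<longlonglongrightarrow> 0"
    unfolding K_def[abs_def] by (intro tendsto_mult_right_zero LIMSEQ_power_zero) simp
  have limR: "(\<lambda>N. exp (6 * T) * (S0 + K N / 6)) \<longlonglongrightarrow> exp (6 * T) * (S0 + 0 / 6)"
    by (intro tendsto_intros limK) simp
  have "ST \<le> exp (6 * T) * (S0 + 0 / 6)"
  proof (rule LIMSEQ_le[OF limT limR], intro exI allI impI)
    fix N :: nat
    have "F N T \<le> F N T + K N / 6" using K0[of N] by simp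
    also have "\<dots> \<le> exp (6 * T) * (F N 0 + K N / 6)" by (rule main)
    also have "\<dots> \<le> exp (6 * T) * (S0 + K N / 6)" using F0[of N] by simp
    finally show "F N T \<le> exp (6 * T) * (S0 + K N / 6)" .
  qed
  hence STle: "ST \<le> exp (6 * T) * S0" by simp
  have wsplit: "wnorm (\<lambda>i. a t i - b t i) ^ 2 = e t 0 ^ 2 + (\<Sum>i. e t i ^ 2 / 2 ^ i) / 2"
    if t: "t \<in> {0..T}" for t
  proof -
    have z: "a t i - b t i = e t (i - 1)" for i using eprev[of t i] t by simp
    have "summable (\<lambda>i. (a t i - b t i) ^ 2 / 2 ^ i)"
      unfolding z by (rule summable_bdd[OF ebound[OF t]])
    from wnorm_split[OF this] show ?thesis unfolding z by simp
  qed
  have eT0: "e T 0 ^ 2 \<le> ST"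
  proof -
    have "(\<Sum>i<1. e T i ^ 2 / 2 ^ i) \<le> ST" unfolding ST_def by (rule sum_le_suminf[OF sT]) auto
    thus ?thesis by simp
  qed
  have "wnorm (\<lambda>i. a T i - b T i) ^ 2 \<le> 3 / 2 * ST"
    using wsplit[OF T0(1)] eT0 unfolding ST_def by simp
  also have "\<dots> \<le> 3 / 2 * (exp (6 * T) * S0)" using STle by simp
  also have "S0 \<le> 2 * wnorm (\<lambda>i. x i - y i) ^ 2"
    using wsplit[OF T0(2)] unfolding a0 b0 S0_def by simp
  hence "3 / 2 * (exp (6 * T) * S0) \<le> 3 / 2 * (exp (6 * T) * (2 * wnorm (\<lambda>i. x i - y i) ^ 2))"
    by simp
  finally show ?thesis by simp
qed



theorem corollary2:
  fixes lam p :: real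
    and v0 :: "nat \<Rightarrow> real" and w :: "nat \<Rightarrow> nat \<Rightarrow> real"
    and v :: "real \<Rightarrow> nat \<Rightarrow> real" and u :: "nat \<Rightarrow> real \<Rightarrow> nat \<Rightarrow> real"
  assumes "0 \<le> lam" "lam < 1" "0 \<le> p" "p \<le> 1"
    and "v0 \<in> V_fin"
    and "\<And>n. w n \<in> V_fin"
    and "(\<lambda>n. wnorm (\<lambda>i. w n i - v0 i)) \<longlonglongrightarrow> 0"
    and "fluid_solution lam p v0 v"
    and "\<And>n. fluid_solution lam p (w n) (u n)"
  shows "\<forall>t \<ge> 0. (\<lambda>n. wnorm (\<lambda>i. u n t i - v t i)) \<longlonglongrightarrow> 0"
proof (intro allI impI)
  fix t :: real assume t: "t \<ge> 0"
  define c where "c = sqrt (3 * exp (6 * t))"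
  have bnd: "\<bar>wnorm (\<lambda>i. u n t i - v t i)\<bar> \<le> c * \<bar>wnorm (\<lambda>i. w n i - v0 i)\<bar>" for n
  proof -
    have "wnorm (\<lambda>i. u n t i - v t i) ^ 2 \<le> 3 * exp (6 * t) * wnorm (\<lambda>i. w n i - v0 i) ^ 2"
      using two_sol[OF assms(1) _ assms(3,4) assms(9)[of n] assms(8) t] assms(2) by simp
    hence "sqrt (wnorm (\<lambda>i. u n t i - v t i) ^ 2) \<le> sqrt (3 * exp (6 * t) * wnorm (\<lambda>i. w n i - v0 i) ^ 2)"
      by (rule real_sqrt_le_mono)
    thus ?thesis by (simp add: c_def real_sqrt_mult)
  qed
  have "(\<lambda>n. c * \<bar>wnorm (\<lambda>i. w n i - v0 i)\<bar>) \<longlonglongrightarrow> c * \<bar>0\<bar>"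
    by (intro tendsto_intros assms(7))
  hence lim: "(\<lambda>n. c * \<bar>wnorm (\<lambda>i. w n i - v0 i)\<bar>) \<longlonglongrightarrow> 0" by simp
  show "(\<lambda>n. wnorm (\<lambda>i. u n t i - v t i)) \<longlonglongrightarrow> 0"
    by (rule Lim_null_comparison[OF _ lim]) (auto simp: bnd)
qed

end
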